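(* Assume (B1)–(B4) and consider the NL-IAPIAL method described in the context, with its cycles $\mathcal C_l$ and values $\tilde c_l$. Let $$\phi^*:=\inf\{\phi(z):g(z)\preceq_{\mathcal K}0\},\qquad \phi_*:=\inf_{z\in\mathbb{R}^n}\phi(z),\qquad R_\phi:=\phi^*-\phi_*+\frac{D_h^2}{\lambda},$$ and let $C_0:=\max\{\|p_0\|,\kappa_0\}/(\min\{1,\bar d\}\tau)$ with $\kappa_0$ and $\bar d$ as in the context. Then for every $l\ge1$ and every $k\in\mathcal C_l$ at which $p_k$ is computed, $$\mathcal L_{\tilde c_l}(z_k;p_k)\le R_\phi+\phi_*+\frac{4C_0^2}{\tilde c_l}.$$
   Context: $\mathcal K\subseteq\mathbb{R}^\ell$ is a nonempty closed convex cone, $\mathcal K^*=\{y:\langle y,x\rangle\ge0\ \forall x\in\mathcal K\}$ its dual cone, $u\preceq_{\mathcal K}v$ means $v-u\in\mathcal K$, $\Pi_S$ is the Euclidean projection onto a closed convex set $S$, $\mathrm{dist}(y,S)$ the Euclidean distance. $\partial_\varepsilon\varphi(z):=\{u:\varphi(z')\ge\varphi(z)+\langle u,z'-z\rangle-\varepsilon\ \forall z'\}$, $\partial=\partial_0$. For differentiable $g:\mathbb{R}^n\to\mathbb{R}^\ell$, $\nabla g(z)\in\mathbb{R}^{n\times\ell}$ is the transpose of the Jacobian. $g$ is $\mathcal K$-convex if $g(tz'+(1-t)z)-tg(z')-(1-t)g(z)\preceq_{\mathcal K}0$ for all $z,z'$, $t\in[0,1]$. (B1) $h:\mathbb{R}^n\to(-\infty,\infty]$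 proper lsc convex, $K_h$-Lipschitz on its domain; $\mathcal H:=\mathrm{dom}\,h$ compact with diameter $D_h$. (B2) $f$ differentiable on an open set containing $\mathcal H$; $m_f,L_f>0$ with $f(z')-f(z)-\langle\nabla f(z),z'-z\rangle\ge-\frac{m_f}{2}\|z'-z\|^2$ and $\|\nabla f(z')-\nabla f(z)\|\le L_f\|z'-z\|$ on $\mathcal H$. (B3) $g$ is $\mathcal K$-convex, differentiable, $\nabla g$ is $L_g$-Lipschitz on $\mathbb{R}^n$. (B4) there exist $\bar z\in\mathrm{int}\,\mathcal H$, $\tau\in(0,1]$ with $g(\bar z)\preceq_{\mathcal K}0$ and $\max\{\|\nabla g(z)p\|,|\langle p,g(\bar z)\rangle|\}\ge\tau\|p\|$ for all $z\in\mathcal H$, $p\in\mathcal K^*$. Constants: $B_f^{(1)}:=\sup_{\mathcal H}\|\nabla f\|$, $B_g^{(0)}:=\sup_{\mathcal H}\|g\|$, $B_g^{(1)}:=\sup_{\mathcal H}\|\nabla g\|$; $\bar d:=\mathrm{dist}(\bar z,\partial\mathcal H)$ ($\partial\mathcal H$ the boundary of $\mathcal H$); $\kappa_0:=2[K_h+B_f^{(1)}]D_h+[\frac{\sigma^2}{2(1-\sigma)^2}+2(\frac{1+\sigma}{1-\sigma})]\frac{D_h^2}{\lambda}$. Functions: $\phi=f+h$; $\mathcal L_c(z;p):=f(z)+h(z)+\frac1{2c}[\mathrm{dist}^2(p+cg(z),-\mathcal K)-\|p\|^2]$; $\widetilde{\mathcal L}_c(z;p):=\mathcal L_c(z;p)-h(z)$,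 with $\nabla_z\widetilde{\mathcal L}_c(z;p)=\nabla f(z)+\nabla g(z)\Pi_{\mathcal K^*}(p+cg(z))$; $\Lambda(c,p):=L_f+L_g\|p\|+c(B_g^{(0)}L_g+[B_g^{(1)}]^2)$. NL-IAPIAL method. Inputs: $\lambda\in(0,1/(2m_f)]$, $\sigma\in(0,1/\sqrt2]$, $c_1>0$, $(z_0,p_0)\in\mathcal H\times\mathbb{R}^\ell$, $(\hat\rho,\hat\eta)\in\mathbb{R}^2_{++}$. Set $\hat k=0$, $k=1$. Iteration $k$: (1) set $L^\psi_{k-1}:=\lambda\Lambda(c_k,p_{k-1})+1$, $\sigma_{k-1}:=\sigma/\sqrt{L^\psi_{k-1}}$, and obtain (by any procedure) $(z_k,v_k,\varepsilon_k)\in\mathbb{R}^n\times\mathbb{R}^n\times\mathbb{R}_+$ with $v_k\in\partial_{\varepsilon_k}(\lambda\mathcal L_{c_k}(\cdot;p_{k-1})+\frac12\|\cdot-z_{k-1}\|^2)(z_k)$ and $\|v_k\|^2+2\varepsilon_k\le\sigma_{k-1}^2\|v_k+z_{k-1}-z_k\|^2$. (2) Set $r_k:=v_k+z_{k-1}-z_k$, $\delta_k:=\varepsilon_k/\lambda$, $\hat z_k:=\mathrm{argmin}_u\{\lambda[\langle\nabla_z\widetilde{\mathcal L}_{c_k}(z_k;p_{k-1}),u-z_k\rangle+h(u)]-\langle r_k,u-z_k\rangle+\frac{L^\psi_{k-1}}2\|u-z_k\|^2\}$, $w_k:=\frac1\lambda[r_k+L^\psi_{k-1}(z_k-\hat z_k)]$,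 $\hat p_k:=\Pi_{\mathcal K^*}(p_{k-1}+c_kg(\hat z_k))$, $\hat q_k:=(p_{k-1}-\hat p_k)/c_k$, $\hat w_k:=w_k+\nabla_z\widetilde{\mathcal L}_{c_k}(\hat z_k;p_{k-1})-\nabla_z\widetilde{\mathcal L}_{c_k}(z_k;p_{k-1})$; if $\|\hat w_k\|\le\hat\rho$ and $\|\hat q_k\|\le\hat\eta$, stop. (3) $p_k:=\Pi_{\mathcal K^*}(p_{k-1}+c_kg(z_k))$. (4) If $k>\hat k+1$ and $\Delta_k:=\frac{1}{k-\hat k-1}[\mathcal L_{c_k}(z_{\hat k+1};p_{\hat k+1})-\mathcal L_{c_k}(z_k;p_k)]\le\frac{\lambda(1-\sigma^2)\hat\rho^2}{4(1+2\sigma)^2}$, set $c_{k+1}=2c_k$ and $\hat k=k$; otherwise $c_{k+1}=c_k$. (5) $k\leftarrow k+1$. Cycles: for $l\ge1$, $\tilde c_l:=2^{l-1}c_1$ and $\mathcal C_l:=\{k: c_k=\tilde c_l\}$ (over generated iterations $k$); $k_l$ is the largest index in $\mathcal C_l$ and $k_0:=0$, so $\mathcal C_l=\{k_{l-1}+1,\dots,k_l\}$ and the value of $\hat k$ during cycle $l$ is $k_{l-1}$. *)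

theory Defs
  imports "HOL-Analysis.Analysis"
begin

definition dual_cone :: "'a::real_inner set \<Rightarrow> 'a set" where
  "dual_cone K = {y. \<forall>x\<in>K. 0 \<le> inner y x}"

definition cone_le :: "'a::ab_group_add set \<Rightarrow> 'a \<Rightarrow> 'a \<Rightarrow> bool" where
  "cone_le K u v \<longleftrightarrow> v - u \<in> K"

definition K_convex :: "'l::real_vector set \<Rightarrow> ('n::real_vector \<Rightarrow> 'l) \<Rightarrow> bool" where
  "K_convex K g \<longleftrightarrow> (\<forall>z z' t. 0 \<le> t \<and> t \<le> 1 \<longrightarrow>
      cone_le K (g (t *\<^sub>R z' + (1 - t) *\<^sub>R z) - t *\<^sub>R g z' - (1 - t) *\<^sub>R g z) 0)"

text \<open>epsilon-subdifferential of the extended-valued function equal to phi on H and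
  +infinity outside H, at a point z of H (so only z' in H need to be tested).\<close>
definition eps_subdiff_on :: "'a::real_inner set \<Rightarrow> real \<Rightarrow> ('a \<Rightarrow> real) \<Rightarrow> 'a \<Rightarrow> 'a set" where
  "eps_subdiff_on H \<epsilon> \<phi> z = {u. \<forall>z'\<in>H. \<phi> z' \<ge> \<phi> z + inner u (z' - z) - \<epsilon>}"

definition aug_lagr :: "('n \<Rightarrow> real) \<Rightarrow> ('n \<Rightarrow> real) \<Rightarrow> ('n \<Rightarrow> 'l::real_normed_vector)
     \<Rightarrow> 'l set \<Rightarrow> real \<Rightarrow> 'n \<Rightarrow> 'l \<Rightarrow> real" where
  "aug_lagr f h g K c z p =
     f z + h z + (1 / (2 * c)) * ((infdist (p + c *\<^sub>R g z) (uminus ` K))\<^sup>2 - (norm p)\<^sup>2)"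

definition grad_tL :: "('n::euclidean_space \<Rightarrow> 'n) \<Rightarrow> ('n \<Rightarrow> 'l::euclidean_space)
     \<Rightarrow> ('n \<Rightarrow> 'n \<Rightarrow> 'l) \<Rightarrow> 'l set \<Rightarrow> real \<Rightarrow> 'n \<Rightarrow> 'l \<Rightarrow> 'n" where
  "grad_tL gradf g Jg K c z p =
     gradf z + adjoint (Jg z) (closest_point (dual_cone K) (p + c *\<^sub>R g z))"

definition Lam :: "real \<Rightarrow> real \<Rightarrow> real \<Rightarrow> real \<Rightarrow> real \<Rightarrow> 'l::real_normed_vector \<Rightarrow> real" where
  "Lam Lf Lg Bg0 Bg1 c p = Lf + Lg * norm p + c * (Bg0 * Lg + Bg1\<^sup>2)"

end

theory Submission
  imports Defs
begin

lemma dual_cone_closed: "closed (dual_cone K)"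
proof -
  have "dual_cone K = (\<Inter>x\<in>K. {y. inner x y \<ge> 0})"
    by (auto simp: dual_cone_def inner_commute)
  then show ?thesis by (auto intro!: closed_INT closed_halfspace_ge)
qed

lemma dual_cone_convex: "convex (dual_cone K)"
  unfolding dual_cone_def convex_def
  by (auto simp: inner_add_left intro!: add_nonneg_nonneg mult_nonneg_nonneg)

lemma dual_cone_0: "0 \<in> dual_cone K"
  by (simp add: dual_cone_def)

lemma dual_cone_scale: "y \<in> dual_cone K \<Longrightarrow> 0 \<le> s \<Longrightarrow> s *\<^sub>R y \<in> dual_cone K"
  by (simp add: dual_cone_def)

lemma bipolar:
  fixes K :: "'a::euclidean_space set"
  assumes "closed K" "convex_cone K" "\<forall>b\<in>dual_cone K. 0 \<le> inner b z"
  shows "z \<in> K"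
proof (rule ccontr)
  assume "z \<notin> K"
  have cv: "convex K" using assms(2) by (simp add: convex_cone_def)
  obtain b c where bc: "inner b z < c" "\<forall>x\<in>K. inner b x > c"
    using separating_hyperplane_closed_point[OF cv assms(1) \<open>z\<notin>K\<close>] by blast
  have "0 \<in> K" using assms(2) by (rule convex_cone_contains_0)
  with bc have c0: "c < 0" by auto
  have "b \<in> dual_cone K"
    unfolding dual_cone_def
  proof (safe)
    fix x assume x: "x \<in> K"
    show "0 \<le> inner b x"
    proof (rule ccontr)
      assume "\<not> 0 \<le> inner b x"
      hence neg: "inner b x < 0" by simp
      define s where "s = c / inner b x"
      have s0: "0 \<le> s" using c0 neg by (simp add: s_def divide_nonpos_neg)
      have "s *\<^sub>R x \<in> K" using convex_cone_scaleR[OF assms(2) s0 x] .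
      moreover have "inner b (s *\<^sub>R x) = c" using neg by (simp add: s_def)
      ultimately show False using bc(2) by force
    qed
  qed
  with assms(3) bc(1) c0 show False by force
qed

lemma proj_props:
  fixes K :: "'a::euclidean_space set" and a :: 'a
  assumes "closed K" "convex_cone K"
  defines "P \<equiv> closest_point (dual_cone K) a"
  shows "P \<in> dual_cone K" "inner P (a - P) = 0"
    "\<forall>y\<in>dual_cone K. inner (a - P) y \<le> 0" "P - a \<in> K"
proof -
  have ne: "dual_cone K \<noteq> {}" using dual_cone_0 by blast
  show P: "P \<in> dual_cone K" unfolding P_def
    by (rule closest_point_in_set[OF dual_cone_closed ne])
  have d: "\<And>x. x \<in> dual_cone K \<Longrightarrow> inner (a - P) (x - P) \<le> 0"
    unfolding P_def by (rule closest_point_dot[OF dual_cone_convex dual_cone_closed])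
  have 1: "inner (a - P) (0 - P) \<le> 0" using d[OF dual_cone_0] .
  have 2: "inner (a - P) (2 *\<^sub>R P - P) \<le> 0" using d[OF dual_cone_scale[OF P]] by simp
  from 1 2 have "inner (a - P) P = 0"
    by (simp add: inner_diff_right algebra_simps)
  thus ip: "inner P (a - P) = 0" by (simp add: inner_commute)
  show ys: "\<forall>y\<in>dual_cone K. inner (a - P) y \<le> 0"
  proof
    fix y assume "y \<in> dual_cone K"
    from d[OF this] \<open>inner (a - P) P = 0\<close> show "inner (a - P) y \<le> 0"
      by (simp add: inner_diff_right)
  qed
  show "P - a \<in> K"
  proof (rule bipolar[OF assms(1,2)], safe)
    fix b assume "b \<in> dual_cone K"
    from ys this have "inner (a - P) b \<le> 0" by blast
    thus "0 \<le> inner b (P - a)" by (simp add: inner_commute inner_diff_right inner_diff_left)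
  qed
qed

lemma deriv_Q:
  fixes g :: "'n::euclidean_space \<Rightarrow> 'l::euclidean_space"
  assumes "\<forall>x. (g has_derivative Jg x) (at x)"
  shows "((\<lambda>s. inner q (g (z + s *\<^sub>R d))) has_real_derivative inner q (Jg (z + s *\<^sub>R d) d)) (at s)"
proof -
  have l: "((\<lambda>s. z + s *\<^sub>R d) has_derivative (\<lambda>s'. s' *\<^sub>R d)) (at s)"
    by (auto intro!: derivative_eq_intros)
  have g: "(g has_derivative Jg (z + s *\<^sub>R d)) (at (z + s *\<^sub>R d))" using assms by blast
  have c: "((\<lambda>s. g (z + s *\<^sub>R d)) has_derivative (\<lambda>s'. Jg (z + s *\<^sub>R d) (s' *\<^sub>R d))) (at s)"
    using has_derivative_compose[OF l g] .
  have bl: "bounded_linear (Jg (z + s *\<^sub>R d))" using g by (rule has_derivative_bounded_linear)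
  have c2: "((\<lambda>s. inner q (g (z + s *\<^sub>R d))) has_derivative (\<lambda>s'. inner q (Jg (z + s *\<^sub>R d) (s' *\<^sub>R d)))) (at s)"
    using has_derivative_inner_right[OF c] .
  have eq: "(\<lambda>s'. inner q (Jg (z + s *\<^sub>R d) (s' *\<^sub>R d))) = (\<lambda>s'. inner q (Jg (z + s *\<^sub>R d) d) * s')"
    by (auto simp: linear_scale[OF bounded_linear.linear[OF bl]] mult.commute)
  show ?thesis using c2 unfolding has_field_derivative_def eq by (simp add: mult.commute)
qed

lemma taylor_inner:
  fixes g :: "'n::euclidean_space \<Rightarrow> 'l::euclidean_space"
  assumes D: "\<forall>x. (g has_derivative Jg x) (at x)"
    and L: "\<forall>x y. onorm (\<lambda>d. Jg y d - Jg x d) \<le> Lg * norm (y - x)"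
  shows "\<bar>inner q (g (z + d)) - inner q (g z) - inner q (Jg z d)\<bar> \<le> norm q * Lg * (norm d)\<^sup>2 / 2"
proof -
  define Q where "Q s = inner q (g (z + s *\<^sub>R d))" for s
  define Q' where "Q' s = inner q (Jg (z + s *\<^sub>R d) d)" for s
  define a where "a = norm q * Lg * (norm d)\<^sup>2"
  have dQ: "\<And>s. (Q has_real_derivative Q' s) (at s)"
    unfolding Q_def Q'_def by (rule deriv_Q[OF D])
  have bnd: "\<bar>Q' s - Q' 0\<bar> \<le> a * s" if "0 \<le> s" for s
  proof -
    have bl1: "bounded_linear (Jg (z + s *\<^sub>R d))" using D has_derivative_bounded_linear by blast
    have bl2: "bounded_linear (Jg z)" using D has_derivative_bounded_linear by blast
    have bl: "bounded_linear (\<lambda>e. Jg (z + s *\<^sub>R d) e - Jg z e)"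
      using bounded_linear_sub[OF bl1 bl2] .
    have "\<bar>Q' s - Q' 0\<bar> = \<bar>inner q (Jg (z + s *\<^sub>R d) d - Jg z d)\<bar>"
      by (simp add: Q'_def inner_diff_right)
    also have "\<dots> \<le> norm q * norm (Jg (z + s *\<^sub>R d) d - Jg z d)"
      by (rule Cauchy_Schwarz_ineq2)
    also have "\<dots> \<le> norm q * (onorm (\<lambda>e. Jg (z + s *\<^sub>R d) e - Jg z e) * norm d)"
      by (rule mult_left_mono[OF onorm[OF bl]]) simp
    also have "\<dots> \<le> norm q * ((Lg * norm ((z + s *\<^sub>R d) - z)) * norm d)"
      by (intro mult_left_mono mult_right_mono) (use L[rule_format, of "z + s *\<^sub>R d" z] in auto)
    also have "\<dots> = a * s" using that by (simp add: a_def power2_eq_square)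
    finally show ?thesis .
  qed
  have up: "Q 1 - Q 0 - Q' 0 - a / 2 \<le> 0"
  proof -
    define F where "F s = Q s - Q 0 - s * Q' 0 - a * s\<^sup>2 / 2" for s
    have "F 1 \<le> F 0"
    proof (rule DERIV_nonpos_imp_nonincreasing[of 0 1 F])
      fix x :: real assume x: "0 \<le> x" "x \<le> 1"
      have "(F has_real_derivative (Q' x - Q' 0 - a * x)) (at x)"
        unfolding F_def by (auto intro!: derivative_eq_intros dQ simp: power2_eq_square)
      moreover have "Q' x - Q' 0 - a * x \<le> 0" using bnd[OF x(1)] by linarith
      ultimately show "\<exists>y. (F has_real_derivative y) (at x) \<and> y \<le> 0" by blast
    qed simp
    thus ?thesis by (simp add: F_def)
  qed
  have lo: "0 \<le> Q 1 - Q 0 - Q' 0 + a / 2"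
  proof -
    define F where "F s = Q s - Q 0 - s * Q' 0 + a * s\<^sup>2 / 2" for s
    have "F 0 \<le> F 1"
    proof (rule DERIV_nonneg_imp_nondecreasing[of 0 1 F])
      fix x :: real assume x: "0 \<le> x" "x \<le> 1"
      have "(F has_real_derivative (Q' x - Q' 0 + a * x)) (at x)"
        unfolding F_def by (auto intro!: derivative_eq_intros dQ simp: power2_eq_square)
      moreover have "0 \<le> Q' x - Q' 0 + a * x" using bnd[OF x(1)] by linarith
      ultimately show "\<exists>y. (F has_real_derivative y) (at x) \<and> 0 \<le> y" by blast
    qed simp
    thus ?thesis by (simp add: F_def)
  qed
  have "Q 1 = inner q (g (z + d))" "Q 0 = inner q (g z)" "Q' 0 = inner q (Jg z d)"
    by (simp_all add: Q_def Q'_def)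
  with up lo show ?thesis unfolding a_def abs_le_iff by linarith
qed

lemma small_eps_le:
  fixes X Y a :: real
  assumes "\<And>s. 0 < s \<Longrightarrow> s \<le> 1 \<Longrightarrow> X \<le> Y + a * s"
  shows "X \<le> Y"
proof (rule ccontr)
  assume "\<not> X \<le> Y"
  define s where "s = min 1 ((X - Y) / (\<bar>a\<bar> + 1))"
  have s0: "0 < s" "s \<le> 1" using \<open>\<not> X \<le> Y\<close> by (auto simp: s_def)
  have "s \<le> (X - Y) / (\<bar>a\<bar> + 1)" by (simp add: s_def)
  hence "s * (\<bar>a\<bar> + 1) \<le> X - Y" by (simp add: pos_le_divide_eq)
  moreover have "a * s \<le> \<bar>a\<bar> * s" using s0 by (simp add: mult_right_mono)
  moreover have "s * (\<bar>a\<bar> + 1) = \<bar>a\<bar> * s + s" by (simp add: algebra_simps)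
  ultimately have "a * s < X - Y" using s0 by linarith
  with assms[OF s0] show False by simp
qed

lemma Kconv_inner:
  assumes "K_convex K g" "p \<in> dual_cone K" "0 \<le> t" "t \<le> 1"
  shows "inner p (g (t *\<^sub>R u + (1 - t) *\<^sub>R z)) \<le> t * inner p (g u) + (1 - t) * inner p (g z)"
proof -
  have "0 - (g (t *\<^sub>R u + (1 - t) *\<^sub>R z) - t *\<^sub>R g u - (1 - t) *\<^sub>R g z) \<in> K"
    using assms(1,3,4) unfolding K_convex_def cone_le_def by blast
  with assms(2) have "0 \<le> inner p (0 - (g (t *\<^sub>R u + (1 - t) *\<^sub>R z) - t *\<^sub>R g u - (1 - t) *\<^sub>R g z))"
    unfolding dual_cone_def by blast
  thus ?thesis by (simp add: inner_diff_right inner_add_right algebra_simps)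
qed

lemma grad_ineq:
  fixes g :: "'n::euclidean_space \<Rightarrow> 'l::euclidean_space"
  assumes D: "\<forall>x. (g has_derivative Jg x) (at x)"
    and L: "\<forall>x y. onorm (\<lambda>d. Jg y d - Jg x d) \<le> Lg * norm (y - x)"
    and Kc: "K_convex K g" and p: "p \<in> dual_cone K"
  shows "inner p (Jg z (u - z)) \<le> inner p (g u) - inner p (g z)"
proof -
  have bl: "bounded_linear (Jg z)" using D has_derivative_bounded_linear by blast
  define a where "a = norm p * Lg * (norm (u - z))\<^sup>2 / 2"
  show ?thesis
  proof (rule small_eps_le[where a = a])
    fix s :: real assume s: "0 < s" "s \<le> 1"
    define y where "y = z + s *\<^sub>R (u - z)"
    have eq: "s *\<^sub>R u + (1 - s) *\<^sub>R z = y" by (simp add: y_def algebra_simps)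
    have c: "inner p (g y) \<le> s * inner p (g u) + (1 - s) * inner p (g z)"
      using Kconv_inner[OF Kc p, of s u z] s unfolding eq by simp
    have t: "\<bar>inner p (g y) - inner p (g z) - inner p (Jg z (s *\<^sub>R (u - z)))\<bar>
        \<le> norm p * Lg * (norm (s *\<^sub>R (u - z)))\<^sup>2 / 2"
      unfolding y_def by (rule taylor_inner[OF D L])
    have lin: "inner p (Jg z (s *\<^sub>R (u - z))) = s * inner p (Jg z (u - z))"
      by (simp add: linear_scale[OF bounded_linear.linear[OF bl]])
    have nn: "norm p * Lg * (norm (s *\<^sub>R (u - z)))\<^sup>2 / 2 = s * (a * s)" using s
      by (simp add: power_mult_distrib a_def power2_eq_square)
    have "s * inner p (Jg z (u - z)) \<le> s * (inner p (g u) - inner p (g z)) + s * (a * s)"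
      using c t unfolding lin nn abs_le_iff by (simp add: algebra_simps)
    hence "s * inner p (Jg z (u - z)) \<le> s * (inner p (g u) - inner p (g z) + a * s)"
      by (simp add: algebra_simps)
    thus "inner p (Jg z (u - z)) \<le> inner p (g u) - inner p (g z) + a * s"
      using s by simp
  qed
qed

lemma cball_in_H:
  fixes H :: "'n::euclidean_space set"
  assumes "closed H" "zbar \<in> interior H" "bounded H"
  shows "0 < infdist zbar (frontier H)" "cball zbar (infdist zbar (frontier H)) \<subseteq> H"
proof -
  have ne: "H \<noteq> {}" using assms(2) interior_subset by blast
  have nu: "H \<noteq> UNIV" using assms(3) not_bounded_UNIV by blast
  have fne: "frontier H \<noteq> {}" using frontier_not_empty[OF ne nu] .
  have "zbar \<notin> frontier H" using assms(2) by (simp add: frontier_def)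
  thus pos: "0 < infdist zbar (frontier H)"
    using infdist_pos_not_in_closed[OF frontier_closed fne] by blast
  define e where "e = infdist zbar (frontier H)"
  have "ball zbar e \<subseteq> H"
  proof (rule ccontr)
    assume "\<not> ball zbar e \<subseteq> H"
    hence "ball zbar e - H \<noteq> {}" by blast
    moreover have "ball zbar e \<inter> H \<noteq> {}"
    proof -
      have "zbar \<in> H" using assms(2) interior_subset by blast
      moreover have "zbar \<in> ball zbar e" using pos unfolding e_def by simp
      ultimately show ?thesis by blast
    qed
    ultimately have "ball zbar e \<inter> frontier H \<noteq> {}"
      using connected_Int_frontier[OF connected_ball] by blast
    then obtain x where x: "x \<in> ball zbar e" "x \<in> frontier H" by blast
    have "infdist zbar (frontier H) \<le> dist zbar x" using infdist_le[OF x(2)] .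
    with x(1) show False unfolding e_def by simp
  qed
  hence "closure (ball zbar e) \<subseteq> H" using assms(1) closure_minimal by blast
  thus "cball zbar (infdist zbar (frontier H)) \<subseteq> H" using pos unfolding e_def by simp
qed

lemma mult_case:
  fixes g :: "'n::euclidean_space \<Rightarrow> 'l::euclidean_space"
  assumes D: "\<forall>x. (g has_derivative Jg x) (at x)"
    and L: "\<forall>x y. onorm (\<lambda>d. Jg y d - Jg x d) \<le> Lg * norm (y - x)"
    and Kc: "K_convex K g" and P: "P \<in> dual_cone K"
    and Pa: "inner P (p + c *\<^sub>R g z - P) = 0" and c: "0 < c"
    and zb: "cone_le K (g zbar) 0"
    and ball: "\<And>u. norm (u - zbar) \<le> s \<Longrightarrow> u \<in> H" and s: "0 < s" "s \<le> 1"
    and reg: "max (norm (adjoint (Jg z) P)) \<bar>inner P (g zbar)\<bar> \<ge> \<tau> * norm P" and tau: "0 < \<tau>"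
    and Mb: "\<forall>u\<in>H. inner (adjoint (Jg z) P) (z - u) \<le> M"
  shows "norm P \<le> norm p \<or> norm P \<le> M / (s * \<tau>)"
proof (rule disjCI)
  assume "\<not> norm P \<le> M / (s * \<tau>)"
  moreover have pos: "0 < s * \<tau>" using s tau by simp
  ultimately have nP: "M < norm P * (s * \<tau>)" using pos_divide_less_eq[OF pos, of M "norm P"] by linarith
  show "norm P \<le> norm p"
  proof (rule ccontr)
    assume "\<not> norm P \<le> norm p"
    hence gt: "norm p < norm P" by simp
    have lin: "linear (Jg z)" using D has_derivative_bounded_linear bounded_linear.linear by blast
    define w where "w = adjoint (Jg z) P"
    have wI: "inner w x = inner P (Jg z x)" for x
      using adjoint_works[OF lin, of x P] by (simp add: w_def inner_commute)
    have "c * inner P (g z) = inner P (p + c *\<^sub>R g z) - inner P p"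
      by (simp add: inner_add_right)
    also have "\<dots> = inner P P - inner P p" using Pa by (simp add: inner_diff_right)
    also have "\<dots> \<ge> norm P * norm P - norm P * norm p"
      using Cauchy_Schwarz_ineq2[of P p] by (simp add: dot_square_norm power2_eq_square)
    finally have "c * inner P (g z) \<ge> norm P * (norm P - norm p)" by (simp add: algebra_simps)
    moreover have "norm P * (norm P - norm p) \<ge> 0" using gt by simp
    ultimately have gz: "inner P (g z) \<ge> 0" using c by (meson dual_order.trans zero_le_mult_iff not_le)
    have "0 - g zbar \<in> K" using zb by (simp add: cone_le_def)
    hence "0 \<le> inner P (0 - g zbar)" using P unfolding dual_cone_def by blast
    hence gzb: "inner P (g zbar) \<le> 0" by simp
    have gi: "inner P (Jg z (zbar - z)) \<le> inner P (g zbar) - inner P (g z)"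
      by (rule grad_ineq[OF D L Kc P])
    have lin2: "Jg z (z - zbar) = - Jg z (zbar - z)"
      using linear_diff[OF lin] linear_neg[OF lin] by (metis minus_diff_eq)
    have base: "inner w (z - zbar) \<ge> \<bar>inner P (g zbar)\<bar>"
      using gi gz gzb by (simp add: wI lin2)
    have zbH: "zbar \<in> H" using ball[of zbar] s by simp
    from reg show False
    proof (cases "norm w \<ge> \<tau> * norm P")
      case True
      hence wne: "w \<noteq> 0" using gt tau by (metis mult_pos_pos norm_zero not_le norm_ge_zero le_less_trans)
      define u where "u = zbar - (s / norm w) *\<^sub>R w"
      have "norm (u - zbar) = s" using wne s by (simp add: u_def)
      hence uH: "u \<in> H" using ball by simp
      have "inner w (z - u) = inner w (z - zbar) + s * norm w"
        using wne by (simp add: u_def inner_diff_right inner_add_right dot_square_norm power2_eq_square)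
      also have "\<dots> \<ge> s * (\<tau> * norm P)"
        using base True s by (smt (verit) abs_ge_zero mult_left_mono)
      finally have "M \<ge> s * (\<tau> * norm P)" using Mb uH w_def by fastforce
      with nP show False by (simp add: algebra_simps)
    next
      case False
      with reg have "\<bar>inner P (g zbar)\<bar> \<ge> \<tau> * norm P" by (simp add: w_def max_def split: if_splits)
      hence "M \<ge> \<tau> * norm P" using base Mb zbH w_def by fastforce
      moreover have "\<tau> * norm P * s \<le> \<tau> * norm P" using s tau by (simp add: mult_left_le)
      ultimately show False using nP by (simp add: algebra_simps)
    qed
  qed
qed

lemma infdist_ge_proj:
  fixes K :: "'a::euclidean_space set"
  assumes "closed K" "convex_cone K"
  shows "norm (closest_point (dual_cone K) a) \<le> infdist a (uminus ` K)"
proof -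
  define P where "P = closest_point (dual_cone K) a"
  note pp = proj_props[OF assms, of a, folded P_def]
  have ne: "uminus ` K \<noteq> {}" using convex_cone_nonempty[OF assms(2)] by simp
  have "norm P \<le> dist a y" if "y \<in> uminus ` K" for y
  proof -
    obtain x where x: "x \<in> K" "y = - x" using \<open>y \<in> uminus ` K\<close> by blast
    have Px: "0 \<le> inner P x" using pp(1) x(1) unfolding dual_cone_def by blast
    define w where "w = (a - P) + x"
    have ax: "a + x = P + w" by (simp add: w_def)
    have sq: "(norm (P + w))\<^sup>2 = (norm P)\<^sup>2 + 2 * inner P w + (norm w)\<^sup>2"
      by (simp add: power2_norm_eq_inner inner_add_left inner_add_right inner_commute)
    have "inner P w = inner P (a - P) + inner P x" by (simp add: w_def inner_add_right)
    hence "(norm (a + x))\<^sup>2 = (norm P)\<^sup>2 + 2 * inner P (a - P) + 2 * inner P x + (norm w)\<^sup>2"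
      using sq ax by simp
    hence "(norm P)\<^sup>2 \<le> (norm (a + x))\<^sup>2" using pp(2) Px by simp
    hence "norm P \<le> norm (a + x)" by (rule power2_le_imp_le) simp
    thus ?thesis using x by (simp add: dist_norm)
  qed
  thus ?thesis unfolding infdist_notempty[OF ne] P_def by (intro cINF_greatest[OF ne]) auto
qed

lemma aug_lower:
  fixes K :: "'l::euclidean_space set"
  assumes "closed K" "convex_cone K" "0 < c"
  shows "f z + h z + 1 / (2 * c) * ((norm (closest_point (dual_cone K) (p + c *\<^sub>R g z)))\<^sup>2 - (norm p)\<^sup>2)
         \<le> aug_lagr f h g K c z p"
proof -
  have "norm (closest_point (dual_cone K) (p + c *\<^sub>R g z)) \<le> infdist (p + c *\<^sub>R g z) (uminus ` K)"
    by (rule infdist_ge_proj[OF assms(1,2)])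
  hence "(norm (closest_point (dual_cone K) (p + c *\<^sub>R g z)))\<^sup>2 \<le> (infdist (p + c *\<^sub>R g z) (uminus ` K))\<^sup>2"
    by (simp add: power_mono)
  hence "1 / (2 * c) * ((norm (closest_point (dual_cone K) (p + c *\<^sub>R g z)))\<^sup>2 - (norm p)\<^sup>2)
     \<le> 1 / (2 * c) * ((infdist (p + c *\<^sub>R g z) (uminus ` K))\<^sup>2 - (norm p)\<^sup>2)"
    using assms(3) by (intro mult_left_mono) auto
  thus ?thesis unfolding aug_lagr_def by simp
qed

lemma aug_upper:
  fixes K :: "'l::euclidean_space set"
  assumes "0 < c" "y \<in> uminus ` K"
  shows "aug_lagr f h g K c z p \<le> f z + h z + 1 / (2 * c) * ((norm (p + c *\<^sub>R g z - y))\<^sup>2 - (norm p)\<^sup>2)"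
proof -
  have "infdist (p + c *\<^sub>R g z) (uminus ` K) \<le> norm (p + c *\<^sub>R g z - y)"
    using infdist_le[OF assms(2)] by (simp add: dist_norm)
  hence "(infdist (p + c *\<^sub>R g z) (uminus ` K))\<^sup>2 \<le> (norm (p + c *\<^sub>R g z - y))\<^sup>2"
    by (simp add: power_mono infdist_nonneg)
  hence "1 / (2 * c) * ((infdist (p + c *\<^sub>R g z) (uminus ` K))\<^sup>2 - (norm p)\<^sup>2)
     \<le> 1 / (2 * c) * ((norm (p + c *\<^sub>R g z - y))\<^sup>2 - (norm p)\<^sup>2)"
    using assms(1) by (intro mult_left_mono) auto
  thus ?thesis unfolding aug_lagr_def by simp
qed

lemma norm_add_sq:
  fixes a b :: "'a::real_inner"
  shows "(norm (a + b))\<^sup>2 = (norm a)\<^sup>2 + 2 * inner a b + (norm b)\<^sup>2"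
  by (simp add: power2_norm_eq_inner inner_add_left inner_add_right inner_commute)

lemma mult_step:
  fixes f h :: "'n::euclidean_space \<Rightarrow> real" and gradf :: "'n \<Rightarrow> 'n"
    and g :: "'n \<Rightarrow> 'l::euclidean_space" and Jg :: "'n \<Rightarrow> 'n \<Rightarrow> 'l" and K :: "'l set" and H :: "'n set"
  assumes cone: "closed K" "convex_cone K"
  and Hc: "convex H"
  and D: "\<forall>x. (g has_derivative Jg x) (at x)"
  and L: "\<forall>x y. onorm (\<lambda>d. Jg y d - Jg x d) \<le> Lg * norm (y - x)"
  and Lg: "0 \<le> Lg" and Lf: "0 \<le> Lf"
  and hc: "convex_on H h" and hl: "\<forall>x\<in>H. \<forall>y\<in>H. \<bar>h x - h y\<bar> \<le> Kh * dist x y" and Kh: "0 \<le> Kh"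
  and fw: "\<forall>x\<in>H. \<forall>y\<in>H. f y - f x - inner (gradf x) (y - x) \<ge> - (mf / 2) * (norm (y - x))\<^sup>2"
  and gfb: "\<forall>x\<in>H. norm (gradf x) \<le> Bf1"
  and g0: "\<forall>x\<in>H. norm (g x) \<le> Bg0" and Bg0: "0 \<le> Bg0"
  and g1: "\<forall>x\<in>H. onorm (Jg x) \<le> Bg1" and Bg1: "0 \<le> Bg1"
  and diam: "\<forall>x\<in>H. \<forall>y\<in>H. norm (x - y) \<le> Dh"
  and mf: "0 < mf" and lam: "0 < lam" "lam \<le> 1 / (2 * mf)" and sig: "0 < \<sigma>" "\<sigma> < 1"
  and c: "0 < c" and zo: "zo \<in> H" and z: "z \<in> H" and eps: "0 \<le> eps"
  and v: "v \<in> eps_subdiff_on H eps (\<lambda>x. lam * aug_lagr f h g K c x p + (norm (x - zo))\<^sup>2 / 2) z"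
  and ve: "(norm v)\<^sup>2 + 2 * eps \<le> (\<sigma> / sqrt (lam * Lam Lf Lg Bg0 Bg1 c p + 1))\<^sup>2 * (norm (v + zo - z))\<^sup>2"
  and u: "u \<in> H"
  shows "inner (adjoint (Jg z) (closest_point (dual_cone K) (p + c *\<^sub>R g z))) (z - u)
     \<le> (Kh + Bf1) * Dh + (1 + 1 / (1 - \<sigma>) + \<sigma>\<^sup>2 / (2 * (1 - \<sigma>)\<^sup>2)) * Dh\<^sup>2 / lam"
proof -
  define Lp where "Lp = lam * Lam Lf Lg Bg0 Bg1 c p + 1"
  define P where "P = closest_point (dual_cone K) (p + c *\<^sub>R g z)"
  define r where "r = v + zo - z"
  define d where "d = u - z"
  define t where "t = 1 / Lp"
  define z' where "z' = z + t *\<^sub>R d"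
  define n where "n = norm d"
  define G where "G = inner P (Jg z d)"
  define A where "A x = aug_lagr f h g K c x p" for x
  note pp = proj_props[OF cone, of "p + c *\<^sub>R g z", folded P_def]
  have Pn: "norm P \<le> norm p + c * Bg0"
  proof -
    have "(norm P)\<^sup>2 = inner P (p + c *\<^sub>R g z)"
      using pp(2) by (simp add: inner_diff_right power2_norm_eq_inner)
    also have "\<dots> \<le> norm P * norm (p + c *\<^sub>R g z)" by (rule norm_cauchy_schwarz)
    finally have "norm P * norm P \<le> norm P * norm (p + c *\<^sub>R g z)" by (simp add: power2_eq_square)
    hence a: "norm P \<le> norm (p + c *\<^sub>R g z)"
      by (cases "norm P = 0") (auto simp: mult_le_cancel_left)
    have "norm (p + c *\<^sub>R g z) \<le> norm p + c * norm (g z)" using c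
      by (metis abs_of_pos norm_scaleR norm_triangle_ineq)
    moreover have "c * norm (g z) \<le> c * Bg0" using g0 z c by simp
    ultimately show ?thesis using a by linarith
  qed
  have Lam0: "Lg * norm P + c * Bg1\<^sup>2 \<le> Lam Lf Lg Bg0 Bg1 c p"
  proof -
    have "Lg * norm P \<le> Lg * (norm p + c * Bg0)" using Pn Lg by (simp add: mult_left_mono)
    thus ?thesis unfolding Lam_def using Lf by (simp add: algebra_simps)
  qed
  have Lam_nn: "0 \<le> Lam Lf Lg Bg0 Bg1 c p"
    unfolding Lam_def using Lf Lg Bg0 c by (simp add: add_nonneg_nonneg)
  have Lp1: "1 \<le> Lp" unfolding Lp_def using Lam_nn lam by simp
  have t: "0 < t" "t \<le> 1" using Lp1 by (auto simp: t_def)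
  have z'H: "z' \<in> H"
  proof -
    have "(1 - t) *\<^sub>R z + t *\<^sub>R u \<in> H" using convexD[OF Hc z u, of "1 - t" t] t by simp
    moreover have "(1 - t) *\<^sub>R z + t *\<^sub>R u = z'" by (simp add: z'_def d_def algebra_simps)
    ultimately show ?thesis by simp
  qed
  have Dh0: "0 \<le> Dh" using diam z by fastforce
  have nD: "n \<le> Dh" using diam u z by (simp add: n_def d_def)
  have sq: "(\<sigma> / sqrt Lp)\<^sup>2 = \<sigma>\<^sup>2 / Lp" using Lp1 by (simp add: power_divide)
  have ve': "(norm v)\<^sup>2 + 2 * eps \<le> \<sigma>\<^sup>2 / Lp * (norm r)\<^sup>2" using ve sq by (simp add: Lp_def r_def)
  have sL: "\<sigma>\<^sup>2 / Lp * (norm r)\<^sup>2 \<le> \<sigma>\<^sup>2 * (norm r)\<^sup>2"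
  proof -
    have "\<sigma>\<^sup>2 / Lp \<le> \<sigma>\<^sup>2" using Lp1 by (simp add: divide_le_eq mult_le_cancel_left1)
    thus ?thesis by (rule mult_right_mono) simp
  qed
  have rv: "norm v \<le> \<sigma> * norm r"
  proof -
    have "(norm v)\<^sup>2 \<le> (\<sigma> * norm r)\<^sup>2" using ve' sL eps by (simp add: power_mult_distrib)
    thus ?thesis by (rule power2_le_imp_le) (use sig in simp)
  qed
  have epsb: "eps / t \<le> \<sigma>\<^sup>2 * (norm r)\<^sup>2 / 2"
  proof -
    have "2 * eps \<le> \<sigma>\<^sup>2 / Lp * (norm r)\<^sup>2" using ve' zero_le_power2[of "norm v"] by linarith
    hence "2 * eps \<le> \<sigma>\<^sup>2 * (norm r)\<^sup>2 / Lp" by simp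
    hence "2 * eps * Lp \<le> \<sigma>\<^sup>2 * (norm r)\<^sup>2" using Lp1 pos_le_divide_eq[of Lp] by simp
    hence "Lp * (2 * eps) \<le> \<sigma>\<^sup>2 * (norm r)\<^sup>2" by (simp add: mult.commute)
    thus ?thesis by (simp add: t_def algebra_simps)
  qed
  have rb: "norm r \<le> Dh / (1 - \<sigma>)"
  proof -
    have "norm r \<le> norm v + norm (zo - z)" unfolding r_def
      by (metis add_diff_eq norm_triangle_ineq)
    moreover have "norm (zo - z) \<le> Dh" using diam zo z by simp
    ultimately have "(1 - \<sigma>) * norm r \<le> Dh" using rv by (simp add: algebra_simps)
    thus ?thesis using sig by (simp add: pos_le_divide_eq mult.commute)
  qed
  have sub: "lam * (A z - A z') \<le> t * (norm r * Dh) + t\<^sup>2 * n\<^sup>2 / 2 + eps"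
  proof -
    have sv: "lam * A z' + (norm (z' - zo))\<^sup>2 / 2 \<ge> lam * A z + (norm (z - zo))\<^sup>2 / 2 + inner v (z' - z) - eps"
      using v z'H unfolding eps_subdiff_on_def A_def by blast
    have e1: "(norm (z' - zo))\<^sup>2 = (norm (z - zo))\<^sup>2 + 2 * t * inner (z - zo) d + t\<^sup>2 * n\<^sup>2"
    proof -
      have "z' - zo = (z - zo) + t *\<^sub>R d" by (simp add: z'_def algebra_simps)
      hence "(norm (z' - zo))\<^sup>2 = (norm (z - zo))\<^sup>2 + 2 * inner (z - zo) (t *\<^sub>R d) + (norm (t *\<^sub>R d))\<^sup>2"
        using norm_add_sq by metis
      thus ?thesis using t by (simp add: n_def power_mult_distrib)
    qed
    have e2: "inner v (z' - z) = t * inner v d" by (simp add: z'_def)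
    have e3: "inner (z - zo) d - inner v d = - inner r d" by (simp add: r_def inner_diff_left inner_add_left)
    have e4: "- inner r d \<le> norm r * Dh"
    proof -
      have "- inner r d \<le> norm r * norm d" using Cauchy_Schwarz_ineq2[of r d] by simp
      also have "\<dots> \<le> norm r * Dh" using nD n_def by (simp add: mult_left_mono)
      finally show ?thesis .
    qed
    have "t * (- inner r d) \<le> t * (norm r * Dh)" using t by (intro mult_left_mono[OF e4]) simp
    moreover have "t * inner (z - zo) d - t * inner v d = t * (- inner r d)"
      using e3 right_diff_distrib by metis
    moreover have "lam * (A z - A z') = lam * A z - lam * A z'" by (rule right_diff_distrib)
    ultimately show ?thesis using sv e1 e2 by linarith
  qed
  have low: "A z \<ge> f z + h z + 1 / (2 * c) * ((norm P)\<^sup>2 - (norm p)\<^sup>2)"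
    unfolding A_def P_def by (rule aug_lower[OF cone c])
  have up: "A z' - A z \<le> f z' + h z' - (f z + h z) + inner P (g z' - g z) + c / 2 * (norm (g z' - g z))\<^sup>2"
  proof -
    define y where "y = p + c *\<^sub>R g z - P"
    have yK: "y \<in> uminus ` K"
    proof -
      have "y = - (P - (p + c *\<^sub>R g z))" by (simp add: y_def)
      thus ?thesis using pp(4) by blast
    qed
    have au: "A z' \<le> f z' + h z' + 1 / (2 * c) * ((norm (p + c *\<^sub>R g z' - y))\<^sup>2 - (norm p)\<^sup>2)"
      unfolding A_def by (rule aug_upper[OF c yK])
    have "p + c *\<^sub>R g z' - y = P + c *\<^sub>R (g z' - g z)" by (simp add: y_def algebra_simps)
    hence "(norm (p + c *\<^sub>R g z' - y))\<^sup>2 = (norm P)\<^sup>2 + 2 * inner P (c *\<^sub>R (g z' - g z)) + (norm (c *\<^sub>R (g z' - g z)))\<^sup>2"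
      using norm_add_sq by metis
    hence "(norm (p + c *\<^sub>R g z' - y))\<^sup>2 = (norm P)\<^sup>2 + 2 * c * inner P (g z' - g z) + c\<^sup>2 * (norm (g z' - g z))\<^sup>2"
      using c by (simp add: power_mult_distrib del: inner_diff_right)
    hence "1 / (2 * c) * ((norm (p + c *\<^sub>R g z' - y))\<^sup>2 - (norm p)\<^sup>2)
       = 1 / (2 * c) * ((norm P)\<^sup>2 - (norm p)\<^sup>2) + inner P (g z' - g z) + c / 2 * (norm (g z' - g z))\<^sup>2"
      using c by (simp add: field_simps power2_eq_square)
    thus ?thesis using au low by linarith
  qed
  have tay: "inner P (g z' - g z) \<le> t * G + norm P * Lg * t\<^sup>2 * n\<^sup>2 / 2"
  proof -
    have bl: "bounded_linear (Jg z)" using D has_derivative_bounded_linear by blast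
    have T0: "\<bar>inner P (g (z + t *\<^sub>R d)) - inner P (g z) - inner P (Jg z (t *\<^sub>R d))\<bar>
        \<le> norm P * Lg * (norm (t *\<^sub>R d))\<^sup>2 / 2" by (rule taylor_inner[OF D L])
    have e1: "inner P (Jg z (t *\<^sub>R d)) = t * G"
      by (simp add: G_def linear_scale[OF bounded_linear.linear[OF bl]])
    have e2: "(norm (t *\<^sub>R d))\<^sup>2 = t\<^sup>2 * n\<^sup>2" using t by (simp add: n_def power_mult_distrib)
    have T: "\<bar>inner P (g z') - inner P (g z) - t * G\<bar> \<le> norm P * Lg * (t\<^sup>2 * n\<^sup>2) / 2"
      using T0 unfolding e1 e2 z'_def .
    have e3: "inner P (g z' - g z) = inner P (g z') - inner P (g z)" by (rule inner_diff_right)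
    have e4: "norm P * Lg * (t\<^sup>2 * n\<^sup>2) / 2 = norm P * Lg * t\<^sup>2 * n\<^sup>2 / 2" by simp
    show ?thesis using T e3 e4 unfolding abs_le_iff by linarith
  qed
  have mvt: "norm (g z' - g z) \<le> Bg1 * t * n"
  proof -
    have "norm (g z' - g z) \<le> Bg1 * norm (z' - z)"
      by (rule differentiable_bound[OF Hc _ _ z'H z]) (use D g1 has_derivative_at_withinI in blast)+
    thus ?thesis using t by (simp add: z'_def n_def)
  qed
  have fconv: "f z' \<le> (1 - t) * f z + t * f u + mf * t * (1 - t) * n\<^sup>2 / 2"
  proof -
    define q where "q = inner (gradf z') d"
    have w1: "f z - f z' - inner (gradf z') (z - z') \<ge> - (mf / 2) * (norm (z - z'))\<^sup>2" using fw z'H z by blast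
    have w2: "f u - f z' - inner (gradf z') (u - z') \<ge> - (mf / 2) * (norm (u - z'))\<^sup>2" using fw z'H u by blast
    have i1: "inner (gradf z') (z - z') = - t * q" by (simp add: z'_def q_def)
    have zz: "u - z' = (1 - t) *\<^sub>R d" by (simp add: z'_def d_def algebra_simps)
    have i2: "inner (gradf z') (u - z') = (1 - t) * q" by (simp add: zz q_def)
    have n1: "(norm (z - z'))\<^sup>2 = t\<^sup>2 * n\<^sup>2" using t by (simp add: z'_def n_def power_mult_distrib)
    have n2: "(norm (u - z'))\<^sup>2 = (1 - t)\<^sup>2 * n\<^sup>2" using t by (simp add: zz n_def power_mult_distrib)
    have a1: "(1 - t) * (f z - f z' + t * q) \<ge> (1 - t) * (- (mf / 2) * (t\<^sup>2 * n\<^sup>2))"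
      using w1 i1 n1 t by (intro mult_left_mono) auto
    have a2: "t * (f u - f z' - (1 - t) * q) \<ge> t * (- (mf / 2) * ((1 - t)\<^sup>2 * n\<^sup>2))"
      using w2 i2 n2 t by (intro mult_left_mono) auto
    have b1: "(1 - t) * (f z - f z' + t * q) + t * (f u - f z' - (1 - t) * q) = (1 - t) * f z + t * f u - f z'"
      by (simp add: algebra_simps)
    have b2: "(1 - t) * (- (mf / 2) * (t\<^sup>2 * n\<^sup>2)) + t * (- (mf / 2) * ((1 - t)\<^sup>2 * n\<^sup>2)) = - (mf * t * (1 - t) * n\<^sup>2 / 2)"
      by (simp add: field_simps power2_eq_square)
    show ?thesis using a1 a2 b1 b2 by linarith
  qed
  have hconv: "h z' \<le> (1 - t) * h z + t * h u"
  proof -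
    have "(1 - t) *\<^sub>R z + t *\<^sub>R u = z'" by (simp add: z'_def d_def algebra_simps)
    thus ?thesis using convex_onD[OF hc, of t z u] t z u by simp
  qed
  have fu: "f u - f z \<le> Bf1 * Dh + mf * Dh\<^sup>2 / 2"
  proof -
    have w: "f z - f u - inner (gradf u) (z - u) \<ge> - (mf / 2) * (norm (z - u))\<^sup>2" using fw z u by blast
    have "- inner (gradf u) (z - u) \<le> norm (gradf u) * norm (z - u)"
      using Cauchy_Schwarz_ineq2[of "gradf u" "z - u"] by simp
    also have "\<dots> \<le> Bf1 * Dh" using gfb diam u z by (intro mult_mono) (auto intro: order_trans[OF norm_ge_zero])
    finally have a: "- inner (gradf u) (z - u) \<le> Bf1 * Dh" .
    have "(norm (z - u))\<^sup>2 \<le> Dh\<^sup>2" using diam u z by (simp add: power_mono)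
    hence "(mf / 2) * (norm (z - u))\<^sup>2 \<le> (mf / 2) * Dh\<^sup>2" using mf by (simp add: mult_left_mono)
    thus ?thesis using w a by linarith
  qed
  have hu: "h u - h z \<le> Kh * Dh"
  proof -
    have "\<bar>h u - h z\<bar> \<le> Kh * dist u z" using hl u z by blast
    also have "\<dots> \<le> Kh * Dh" using diam u z Kh by (simp add: dist_norm mult_left_mono)
    finally show ?thesis by simp
  qed
  have tfac: "t * (1 + lam * (norm P * Lg + c * Bg1\<^sup>2)) \<le> 1"
  proof -
    have "lam * (norm P * Lg + c * Bg1\<^sup>2) \<le> lam * Lam Lf Lg Bg0 Bg1 c p"
      using Lam0 lam by (simp add: mult_left_mono mult.commute)
    hence "t * (1 + lam * (norm P * Lg + c * Bg1\<^sup>2)) \<le> t * Lp" using t by (simp add: Lp_def mult_left_mono)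
    thus ?thesis using Lp1 by (simp add: t_def)
  qed
  define X where "X = f z' + h z' - (f z + h z) + inner P (g z' - g z) + c / 2 * (norm (g z' - g z))\<^sup>2"
  define phid where "phid = f u + h u - (f z + h z)"
  have M1a: "f z' + h z' - (f z + h z) \<le> t * phid + mf * t * (1 - t) * n\<^sup>2 / 2"
  proof -
    have "(1 - t) * f z + t * f u + mf * t * (1 - t) * n\<^sup>2 / 2 + ((1 - t) * h z + t * h u) - (f z + h z)
        = t * phid + mf * t * (1 - t) * n\<^sup>2 / 2" by (simp add: phid_def algebra_simps)
    thus ?thesis using fconv hconv by linarith
  qed
  have M1b: "c / 2 * (norm (g z' - g z))\<^sup>2 \<le> c / 2 * (Bg1 * t * n)\<^sup>2"
    using mvt c by (intro mult_left_mono power_mono) auto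
  have M1: "X \<le> t * phid + mf * t * (1 - t) * n\<^sup>2 / 2 + (t * G + norm P * Lg * t\<^sup>2 * n\<^sup>2 / 2) + c / 2 * (Bg1 * t * n)\<^sup>2"
    using M1a M1b tay unfolding X_def by linarith
  have M2: "- (lam * X) \<le> t * (norm r * Dh) + t\<^sup>2 * n\<^sup>2 / 2 + eps"
  proof -
    have "A z' - A z \<le> X" using up unfolding X_def .
    hence "lam * (A z' - A z) \<le> lam * X" using lam by (simp add: mult_left_mono)
    thus ?thesis using sub by (simp add: algebra_simps)
  qed
  have M3: "lam * X \<le> lam * (t * phid + mf * t * (1 - t) * n\<^sup>2 / 2 + (t * G + norm P * Lg * t\<^sup>2 * n\<^sup>2 / 2) + c / 2 * (Bg1 * t * n)\<^sup>2)"
    using M1 lam by (simp add: mult_left_mono)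
  define Z where "Z = lam * phid + lam * mf * (1 - t) * n\<^sup>2 / 2 + t * (1 + lam * (norm P * Lg + c * Bg1\<^sup>2)) * n\<^sup>2 / 2
      + norm r * Dh + eps / t"
  have tZ: "t * Z = t * (norm r * Dh) + t\<^sup>2 * n\<^sup>2 / 2 + eps
      + lam * (t * phid + mf * t * (1 - t) * n\<^sup>2 / 2 + (t * G + norm P * Lg * t\<^sup>2 * n\<^sup>2 / 2) + c / 2 * (Bg1 * t * n)\<^sup>2)
      - t * (lam * G)"
    using t by (simp add: Z_def field_simps power2_eq_square)
  have "t * (- lam * G) \<le> t * Z" using M2 M3 tZ by (simp add: algebra_simps)
  hence M4: "- lam * G \<le> Z" using t(1) by (rule mult_left_le_imp_le)
  have lm: "lam * mf \<le> 1 / 2" using lam mf by (simp add: field_simps)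
  have n2: "n\<^sup>2 \<le> Dh\<^sup>2" using nD n_def by (simp add: power_mono)
  have Z1: "lam * phid \<le> lam * (Kh + Bf1) * Dh + lam * mf * Dh\<^sup>2 / 2"
  proof -
    have "phid \<le> (Kh + Bf1) * Dh + mf * Dh\<^sup>2 / 2" using fu hu unfolding phid_def by (simp add: algebra_simps)
    hence "lam * phid \<le> lam * ((Kh + Bf1) * Dh + mf * Dh\<^sup>2 / 2)" using lam by (simp add: mult_left_mono)
    thus ?thesis by (simp add: algebra_simps)
  qed
  have Z2: "lam * mf * Dh\<^sup>2 / 2 \<le> Dh\<^sup>2 / 4"
  proof -
    have "lam * mf * Dh\<^sup>2 \<le> 1 / 2 * Dh\<^sup>2" by (rule mult_right_mono[OF lm]) simp
    thus ?thesis by simp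
  qed
  have Z3: "lam * mf * (1 - t) * n\<^sup>2 / 2 \<le> Dh\<^sup>2 / 4"
  proof -
    have "(1 - t) * n\<^sup>2 \<le> 1 * n\<^sup>2" using t by (intro mult_right_mono) auto
    hence "(1 - t) * n\<^sup>2 \<le> Dh\<^sup>2" using n2 by simp
    hence "lam * mf * ((1 - t) * n\<^sup>2) \<le> lam * mf * Dh\<^sup>2" using lam mf by (simp add: mult_left_mono)
    thus ?thesis using Z2 by (simp add: algebra_simps)
  qed
  have Z4: "t * (1 + lam * (norm P * Lg + c * Bg1\<^sup>2)) * n\<^sup>2 / 2 \<le> Dh\<^sup>2 / 2"
  proof -
    have "t * (1 + lam * (norm P * Lg + c * Bg1\<^sup>2)) * n\<^sup>2 \<le> 1 * n\<^sup>2" by (rule mult_right_mono[OF tfac]) simp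
    thus ?thesis using n2 by simp
  qed
  have Z5: "norm r * Dh \<le> Dh\<^sup>2 / (1 - \<sigma>)"
  proof -
    have "norm r * Dh \<le> Dh / (1 - \<sigma>) * Dh" by (rule mult_right_mono[OF rb Dh0])
    thus ?thesis by (simp add: power2_eq_square)
  qed
  have Z6: "eps / t \<le> \<sigma>\<^sup>2 * Dh\<^sup>2 / (2 * (1 - \<sigma>)\<^sup>2)"
  proof -
    have "(norm r)\<^sup>2 \<le> (Dh / (1 - \<sigma>))\<^sup>2" using rb by (simp add: power_mono)
    hence "\<sigma>\<^sup>2 * (norm r)\<^sup>2 / 2 \<le> \<sigma>\<^sup>2 * (Dh / (1 - \<sigma>))\<^sup>2 / 2" by (simp add: mult_left_mono)
    moreover have "\<sigma>\<^sup>2 * (Dh / (1 - \<sigma>))\<^sup>2 / 2 = \<sigma>\<^sup>2 * Dh\<^sup>2 / (2 * (1 - \<sigma>)\<^sup>2)"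
      by (simp add: power_divide)
    ultimately show ?thesis using epsb by linarith
  qed
  have main: "- lam * G \<le> lam * (Kh + Bf1) * Dh + (1 + 1 / (1 - \<sigma>) + \<sigma>\<^sup>2 / (2 * (1 - \<sigma>)\<^sup>2)) * Dh\<^sup>2"
  proof -
    have "(1 + 1 / (1 - \<sigma>) + \<sigma>\<^sup>2 / (2 * (1 - \<sigma>)\<^sup>2)) * Dh\<^sup>2
        = Dh\<^sup>2 / 4 + Dh\<^sup>2 / 4 + Dh\<^sup>2 / 2 + Dh\<^sup>2 / (1 - \<sigma>) + \<sigma>\<^sup>2 * Dh\<^sup>2 / (2 * (1 - \<sigma>)\<^sup>2)"
      by (simp add: algebra_simps add_divide_distrib)
    thus ?thesis using M4 Z1 Z2 Z3 Z4 Z5 Z6 unfolding Z_def by linarith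
  qed
  have lin: "linear (Jg z)" using D has_derivative_bounded_linear bounded_linear.linear by blast
  have "inner (adjoint (Jg z) P) (z - u) = - G"
    using adjoint_works[OF lin, of "z - u" P]
    by (simp add: G_def d_def inner_commute linear_diff[OF lin] inner_diff_left inner_diff_right)
  moreover have "- G \<le> (Kh + Bf1) * Dh + (1 + 1 / (1 - \<sigma>) + \<sigma>\<^sup>2 / (2 * (1 - \<sigma>)\<^sup>2)) * Dh\<^sup>2 / lam"
    using main lam by (simp add: field_simps)
  ultimately show ?thesis by (simp add: P_def)
qed

lemma lagr_step:
  fixes f h :: "'n::euclidean_space \<Rightarrow> real"
    and g :: "'n \<Rightarrow> 'l::euclidean_space" and K :: "'l set" and H :: "'n set"
  assumes cone: "closed K" "convex_cone K"
  and diam: "\<forall>x\<in>H. \<forall>y\<in>H. norm (x - y) \<le> Dh"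
  and lam: "0 < lam" and sig: "0 \<le> \<sigma>" "\<sigma>\<^sup>2 \<le> 1 / 2" and Lp: "1 \<le> Lp"
  and c: "0 < c" and zo: "zo \<in> H" and z: "z \<in> H" and eps: "0 \<le> eps"
  and v: "v \<in> eps_subdiff_on H eps (\<lambda>x. lam * aug_lagr f h g K c x p + (norm (x - zo))\<^sup>2 / 2) z"
  and ve: "(norm v)\<^sup>2 + 2 * eps \<le> (\<sigma> / sqrt Lp)\<^sup>2 * (norm (v + zo - z))\<^sup>2"
  and u: "u \<in> H" and feas: "cone_le K (g u) 0"
  shows "aug_lagr f h g K c z (closest_point (dual_cone K) (p + c *\<^sub>R g z))
     \<le> f u + h u + Dh\<^sup>2 / lam + (norm (closest_point (dual_cone K) (p + c *\<^sub>R g z) - p))\<^sup>2 / c"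
proof -
  define P where "P = closest_point (dual_cone K) (p + c *\<^sub>R g z)"
  define r where "r = v + zo - z"
  define A where "A x = aug_lagr f h g K c x p" for x
  note pp = proj_props[OF cone, of "p + c *\<^sub>R g z", folded P_def]
  have Dh0: "0 \<le> Dh" using diam z by fastforce
  have chg: "aug_lagr f h g K c z P \<le> A z + (norm (P - p))\<^sup>2 / c"
  proof -
    define y where "y = p + c *\<^sub>R g z - P"
    have yK: "y \<in> uminus ` K"
    proof -
      have "y = - (P - (p + c *\<^sub>R g z))" by (simp add: y_def)
      thus ?thesis using pp(4) by blast
    qed
    have au: "aug_lagr f h g K c z P \<le> f z + h z + 1 / (2 * c) * ((norm (P + c *\<^sub>R g z - y))\<^sup>2 - (norm P)\<^sup>2)"
      by (rule aug_upper[OF c yK])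
    have low: "A z \<ge> f z + h z + 1 / (2 * c) * ((norm P)\<^sup>2 - (norm p)\<^sup>2)"
      unfolding A_def P_def by (rule aug_lower[OF cone c])
    have e1: "P + c *\<^sub>R g z - y = P + (P - p)" by (simp add: y_def)
    have n1: "(norm (P + (P - p)))\<^sup>2 = (norm P)\<^sup>2 + 2 * inner P (P - p) + (norm (P - p))\<^sup>2"
      by (rule norm_add_sq)
    have n2: "(norm (P + - (P - p)))\<^sup>2 = (norm P)\<^sup>2 + 2 * inner P (- (P - p)) + (norm (- (P - p)))\<^sup>2"
      by (rule norm_add_sq)
    moreover have "P + - (P - p) = p" by simp
    moreover have "inner P (- (P - p)) = - inner P (P - p)" by (rule inner_minus_right)
    moreover have "norm (- (P - p)) = norm (P - p)" by (rule norm_minus_cancel)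
    ultimately have n2': "(norm p)\<^sup>2 = (norm P)\<^sup>2 - 2 * inner P (P - p) + (norm (P - p))\<^sup>2" by simp
    have "1 / (2 * c) * ((norm (P + c *\<^sub>R g z - y))\<^sup>2 - (norm P)\<^sup>2)
        = 1 / (2 * c) * ((norm P)\<^sup>2 - (norm p)\<^sup>2) + (norm (P - p))\<^sup>2 / c"
      unfolding e1 n1 n2' using c by (simp add: field_simps)
    thus ?thesis using au low by linarith
  qed
  have sv: "lam * A u + (norm (u - zo))\<^sup>2 / 2 \<ge> lam * A z + (norm (z - zo))\<^sup>2 / 2 + inner v (u - z) - eps"
    using v u unfolding eps_subdiff_on_def A_def by blast
  have sq: "(\<sigma> / sqrt Lp)\<^sup>2 = \<sigma>\<^sup>2 / Lp" using Lp by (simp add: power_divide)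
  have sL: "\<sigma>\<^sup>2 / Lp * (norm r)\<^sup>2 \<le> \<sigma>\<^sup>2 * (norm r)\<^sup>2"
  proof -
    have "\<sigma>\<^sup>2 / Lp \<le> \<sigma>\<^sup>2" using Lp by (simp add: divide_le_eq mult_le_cancel_left1)
    thus ?thesis by (rule mult_right_mono) simp
  qed
  have ve': "(norm v)\<^sup>2 + 2 * eps \<le> \<sigma>\<^sup>2 * (norm r)\<^sup>2" using ve sq sL by (simp add: r_def)
  have rv: "norm v \<le> \<sigma> * norm r"
  proof -
    have "(norm v)\<^sup>2 \<le> (\<sigma> * norm r)\<^sup>2" using ve' eps by (simp add: power_mult_distrib)
    thus ?thesis by (rule power2_le_imp_le) (use sig in simp)
  qed
  have id: "(norm (u - zo))\<^sup>2 / 2 - (norm (z - zo))\<^sup>2 / 2 - inner v (u - z)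
      = (norm ((u - zo) - v))\<^sup>2 / 2 - (norm r)\<^sup>2 / 2"
  proof -
    have a: "(norm ((u - zo) + - v))\<^sup>2 = (norm (u - zo))\<^sup>2 + 2 * inner (u - zo) (- v) + (norm (- v))\<^sup>2"
      by (rule norm_add_sq)
    have b: "(norm ((z - zo) + - v))\<^sup>2 = (norm (z - zo))\<^sup>2 + 2 * inner (z - zo) (- v) + (norm (- v))\<^sup>2"
      by (rule norm_add_sq)
    have rr: "norm r = norm ((z - zo) + - v)"
      by (metis r_def norm_minus_commute add.commute diff_add_eq diff_diff_eq2 minus_diff_eq uminus_add_conv_diff)
    have iv: "inner (u - zo) (- v) - inner (z - zo) (- v) = - inner v (u - z)"
      by (simp add: inner_diff_left inner_diff_right inner_commute)
    show ?thesis using a b iv unfolding rr by (simp add: algebra_simps)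
  qed
  have nuv: "norm ((u - zo) - v) \<le> Dh + norm v"
  proof -
    have "norm (u - zo) \<le> Dh" using diam u zo by blast
    thus ?thesis using norm_triangle_ineq4[of "u - zo" v] by linarith
  qed
  have nuv2: "(norm ((u - zo) - v))\<^sup>2 \<le> (Dh + norm v)\<^sup>2" using nuv by (simp add: power_mono)
  have amgm: "Dh * (\<sigma> * norm r) \<le> Dh\<^sup>2 / 2 + \<sigma>\<^sup>2 * (norm r)\<^sup>2 / 2"
  proof -
    have "0 \<le> (Dh - \<sigma> * norm r)\<^sup>2" by simp
    thus ?thesis by (simp add: power2_eq_square algebra_simps)
  qed
  have dv: "Dh * norm v \<le> Dh * (\<sigma> * norm r)" using rv Dh0 by (simp add: mult_left_mono)
  have s2: "\<sigma>\<^sup>2 * (norm r)\<^sup>2 \<le> (1 - \<sigma>\<^sup>2) * (norm r)\<^sup>2"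
    using sig by (intro mult_right_mono) auto
  have X: "(norm (u - zo))\<^sup>2 / 2 - (norm (z - zo))\<^sup>2 / 2 - inner v (u - z) + eps \<le> Dh\<^sup>2"
  proof -
    have "(Dh + norm v)\<^sup>2 = Dh\<^sup>2 + 2 * (Dh * norm v) + (norm v)\<^sup>2" by (simp add: power2_eq_square algebra_simps)
    thus ?thesis using id nuv2 ve' amgm dv s2 by (simp add: algebra_simps)
  qed
  have pr: "lam * A z \<le> lam * A u + Dh\<^sup>2" using sv X by linarith
  have fe: "A u \<le> f u + h u"
  proof -
    have "0 - g u \<in> K" using feas by (simp add: cone_le_def)
    hence "c *\<^sub>R (0 - g u) \<in> K" using convex_cone_scaleR[OF cone(2), of c "0 - g u"] c by simp
    hence yK: "c *\<^sub>R g u \<in> uminus ` K" by (metis image_eqI minus_diff_eq diff_zero scaleR_minus_right)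
    have "A u \<le> f u + h u + 1 / (2 * c) * ((norm (p + c *\<^sub>R g u - c *\<^sub>R g u))\<^sup>2 - (norm p)\<^sup>2)"
      unfolding A_def by (rule aug_upper[OF c yK])
    thus ?thesis by simp
  qed
  have "A z \<le> f u + h u + Dh\<^sup>2 / lam"
  proof -
    have "lam * A z \<le> lam * (f u + h u) + Dh\<^sup>2" using pr fe lam by (smt (verit) mult_left_mono)
    thus ?thesis using lam by (simp add: field_simps)
  qed
  thus ?thesis using chg unfolding P_def by linarith
qed

theorem lemma4p6:
  fixes f :: "'n::euclidean_space \<Rightarrow> real" and gradf :: "'n \<Rightarrow> 'n"
    and h :: "'n \<Rightarrow> real" and H U :: "'n set"
    and g :: "'n \<Rightarrow> 'l::euclidean_space" and Jg :: "'n \<Rightarrow> 'n \<Rightarrow> 'l"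
    and K :: "'l set"
    and Kh mf Lf Lg \<tau> lam \<sigma> c1 \<rho> \<eta> :: real and zbar :: "'n"
    and z v zhat :: "nat \<Rightarrow> 'n" and eps c :: "nat \<Rightarrow> real" and p :: "nat \<Rightarrow> 'l"
    and khat :: "nat \<Rightarrow> nat" and stop :: "nat \<Rightarrow> bool"
    and l k :: nat
    and kappa0 Rphi C0 :: real
  defines "Kstar \<equiv> dual_cone K"
    and "Dh \<equiv> diameter H"
    and "Bf1 \<equiv> (SUP x\<in>H. norm (gradf x))"
    and "Bg0 \<equiv> (SUP x\<in>H. norm (g x))"
    and "Bg1 \<equiv> (SUP x\<in>H. onorm (Jg x))"
    and "dbar \<equiv> infdist zbar (frontier H)"
    and "phi_up \<equiv> (INF x\<in>{x\<in>H. cone_le K (g x) 0}. f x + h x)"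
    and "phi_low \<equiv> (INF x\<in>H. f x + h x)"
  assumes kappa0_def: "kappa0 = 2 * (Kh + Bf1) * Dh
           + (\<sigma>\<^sup>2 / (2 * (1 - \<sigma>)\<^sup>2) + 2 * ((1 + \<sigma>) / (1 - \<sigma>))) * Dh\<^sup>2 / lam"
    and Rphi_def: "Rphi = phi_up - phi_low + Dh\<^sup>2 / lam"
    and C0_def: "C0 = max (norm (p 0)) kappa0 / (min 1 dbar * \<tau>)"
    \<comment> \<open>cone\<close>
    and cone: "closed K" "convex_cone K"
    \<comment> \<open>(B1)\<close>
    and B1: "H \<noteq> {}" "compact H" "convex H" "convex_on H h"
       "\<forall>x\<in>H. \<forall>y\<in>H. \<bar>h x - h y\<bar> \<le> Kh * dist x y"
    \<comment> \<open>(B2)\<close>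
    and B2: "open U" "H \<subseteq> U" "\<forall>x\<in>U. (f has_derivative (\<lambda>d. inner (gradf x) d)) (at x)"
       "mf > 0" "Lf > 0"
       "\<forall>x\<in>H. \<forall>y\<in>H. f y - f x - inner (gradf x) (y - x) \<ge> - (mf / 2) * (norm (y - x))\<^sup>2"
       "\<forall>x\<in>H. \<forall>y\<in>H. norm (gradf y - gradf x) \<le> Lf * norm (y - x)"
    \<comment> \<open>(B3)\<close>
    and B3: "K_convex K g" "\<forall>x. (g has_derivative Jg x) (at x)"
       "\<forall>x y. onorm (\<lambda>d. Jg y d - Jg x d) \<le> Lg * norm (y - x)"
    \<comment> \<open>(B4)\<close>
    and B4: "zbar \<in> interior H" "0 < \<tau>" "\<tau> \<le> 1" "cone_le K (g zbar) 0"
       "\<forall>x\<in>H. \<forall>q\<in>Kstar. max (norm (adjoint (Jg x) q)) \<bar>inner q (g zbar)\<bar> \<ge> \<tau> * norm q"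
    \<comment> \<open>inputs of NL-IAPIAL\<close>
    and inputs: "0 < lam" "lam \<le> 1 / (2 * mf)" "0 < \<sigma>" "\<sigma> \<le> 1 / sqrt 2" "0 < c1"
       "z 0 \<in> H" "0 < \<rho>" "0 < \<eta>"
    and init: "c 1 = c1" "khat 1 = 0"
    \<comment> \<open>stopping test of step (2) at iteration j\<close>
    and stop_def: "\<forall>j. stop j \<longleftrightarrow>
       (let r = v j + z (j - 1) - z j;
            Lpsi = lam * Lam Lf Lg Bg0 Bg1 (c j) (p (j - 1)) + 1;
            w = (1 / lam) *\<^sub>R (r + Lpsi *\<^sub>R (z j - zhat j));
            ph = closest_point Kstar (p (j - 1) + c j *\<^sub>R g (zhat j));
            qh = (1 / c j) *\<^sub>R (p (j - 1) - ph);
            wh = w + grad_tL gradf g Jg K (c j) (zhat j) (p (j - 1))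
                   - grad_tL gradf g Jg K (c j) (z j) (p (j - 1))
        in norm wh \<le> \<rho> \<and> norm qh \<le> \<eta>)"
    \<comment> \<open>step (1) and the definition of hat z in step (2), for every iteration j that is reached\<close>
    and step1: "\<forall>j\<ge>1. (\<forall>i\<in>{1..<j}. \<not> stop i) \<longrightarrow>
       (let Lpsi = lam * Lam Lf Lg Bg0 Bg1 (c j) (p (j - 1)) + 1 in
          z j \<in> H \<and> 0 \<le> eps j \<and>
          v j \<in> eps_subdiff_on H (eps j)
                 (\<lambda>x. lam * aug_lagr f h g K (c j) x (p (j - 1)) + (norm (x - z (j - 1)))\<^sup>2 / 2) (z j) \<and>
          (norm (v j))\<^sup>2 + 2 * eps j \<le> (\<sigma> / sqrt Lpsi)\<^sup>2 * (norm (v j + z (j - 1) - z j))\<^sup>2)"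
    and step2: "\<forall>j\<ge>1. (\<forall>i\<in>{1..<j}. \<not> stop i) \<longrightarrow>
       (let Lpsi = lam * Lam Lf Lg Bg0 Bg1 (c j) (p (j - 1)) + 1;
            r = v j + z (j - 1) - z j;
            gr = grad_tL gradf g Jg K (c j) (z j) (p (j - 1));
            obj = (\<lambda>u. lam * (inner gr (u - z j) + h u) - inner r (u - z j)
                        + Lpsi / 2 * (norm (u - z j))\<^sup>2)
        in zhat j \<in> H \<and> (\<forall>u\<in>H. obj (zhat j) \<le> obj u))"
    \<comment> \<open>steps (3) and (4), for every iteration j that is reached and does not stop\<close>
    and step34: "\<forall>j\<ge>1. (\<forall>i\<in>{1..j}. \<not> stop i) \<longrightarrow>
       p j = closest_point Kstar (p (j - 1) + c j *\<^sub>R g (z j)) \<and>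
       (if khat j + 1 < j \<and>
           (aug_lagr f h g K (c j) (z (khat j + 1)) (p (khat j + 1)) - aug_lagr f h g K (c j) (z j) (p j))
             / real (j - khat j - 1)
           \<le> lam * (1 - \<sigma>\<^sup>2) * \<rho>\<^sup>2 / (4 * (1 + 2 * \<sigma>)\<^sup>2)
        then c (j + 1) = 2 * c j \<and> khat (j + 1) = j
        else c (j + 1) = c j \<and> khat (j + 1) = khat j)"
    \<comment> \<open>k lies in cycle l and p_k is computed\<close>
    and l: "1 \<le> l"
    and k: "1 \<le> k" "c k = 2 ^ (l - 1) * c1" "\<forall>i\<in>{1..k}. \<not> stop i"
  shows "aug_lagr f h g K (2 ^ (l - 1) * c1) (z k) (p k) \<le> Rphi + phi_low + 4 * C0\<^sup>2 / (2 ^ (l - 1) * c1)"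
proof -
  have Kc: "closed K" "convex_cone K" using cone by auto
  have Hb: "bounded H" using B1(2) compact_imp_bounded by blast
  have Hcl: "closed H" using B1(2) compact_imp_closed by blast
  have diam: "\<forall>x\<in>H. \<forall>y\<in>H. norm (x - y) \<le> Dh"
    unfolding Dh_def using diameter_bounded_bound[OF Hb] by (simp add: dist_norm)
  have zbH: "zbar \<in> H" using B4(1) interior_subset by blast
  have Dh0: "0 \<le> Dh" using diam zbH by fastforce
  note cb = cball_in_H[OF Hcl B4(1) Hb]
  have dpos: "0 < dbar" using cb(1) unfolding dbar_def .
  define s where "s = min 1 dbar"
  have s: "0 < s" "s \<le> 1" using dpos by (auto simp: s_def)
  have ball: "u \<in> H" if "norm (u - zbar) \<le> s" for u
  proof -
    have "u \<in> cball zbar dbar" using that unfolding s_def by (simp add: dist_norm norm_minus_commute)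
    thus "u \<in> H" using cb(2) unfolding dbar_def by blast
  qed
  obtain b :: 'n where b: "b \<in> Basis" using nonempty_Basis by blast
  have nb: "norm b = 1" using b by simp
  have blJ: "\<And>x. bounded_linear (Jg x)" using B3(2) has_derivative_bounded_linear by blast
  have Lg0: "0 \<le> Lg"
  proof -
    have bl: "bounded_linear (\<lambda>d. Jg b d - Jg 0 d)" by (rule bounded_linear_sub[OF blJ blJ])
    have "0 \<le> onorm (\<lambda>d. Jg b d - Jg 0 d)" by (rule onorm_pos_le[OF bl])
    also have "\<dots> \<le> Lg * norm (b - 0)" using B3(3) by blast
    finally show ?thesis using nb by simp
  qed
  have Kh0: "0 \<le> Kh"
  proof -
    have yH: "zbar + s *\<^sub>R b \<in> H" using ball[of "zbar + s *\<^sub>R b"] s nb by simp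
    have "0 \<le> \<bar>h (zbar + s *\<^sub>R b) - h zbar\<bar>" by simp
    also have "\<dots> \<le> Kh * dist (zbar + s *\<^sub>R b) zbar" using B1(5) yH zbH by blast
    finally have "0 \<le> Kh * s" using s nb by (simp add: dist_norm)
    thus ?thesis using s by (simp add: zero_le_mult_iff)
  qed
  have Lf0: "0 \<le> Lf" using B2(5) by simp
  have onb: "onorm (Jg x) \<le> onorm (Jg zbar) + Lg * Dh" if x: "x \<in> H" for x
  proof -
    have eq: "Jg x = (\<lambda>d. (Jg x d - Jg zbar d) + Jg zbar d)" by simp
    have "onorm (Jg x) \<le> onorm (\<lambda>d. Jg x d - Jg zbar d) + onorm (Jg zbar)"
      by (subst eq, rule onorm_triangle[OF bounded_linear_sub[OF blJ blJ] blJ])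
    moreover have "onorm (\<lambda>d. Jg x d - Jg zbar d) \<le> Lg * norm (x - zbar)" using B3(3) by blast
    moreover have "Lg * norm (x - zbar) \<le> Lg * Dh" using diam x zbH Lg0 by (simp add: mult_left_mono)
    ultimately show ?thesis by linarith
  qed
  have bddJ: "bdd_above ((\<lambda>x. onorm (Jg x)) ` H)"
    by (rule bdd_aboveI[where M = "onorm (Jg zbar) + Lg * Dh"]) (use onb in auto)
  have g1: "\<forall>x\<in>H. onorm (Jg x) \<le> Bg1" unfolding Bg1_def using bddJ by (auto intro: cSUP_upper)
  have Bg1_0: "0 \<le> Bg1" using g1 zbH onorm_pos_le[OF blJ] by (meson order_trans)
  have gdiff: "norm (g x - g y) \<le> Bg1 * norm (x - y)" if "x \<in> H" "y \<in> H" for x y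
    by (rule differentiable_bound[OF B1(3) _ _ that]) (use B3(2) g1 has_derivative_at_withinI in blast)+
  have gb: "norm (g x) \<le> norm (g zbar) + Bg1 * Dh" if x: "x \<in> H" for x
  proof -
    have "norm (g x) \<le> norm (g zbar) + norm (g x - g zbar)" by (metis norm_triangle_sub add.commute)
    moreover have "norm (g x - g zbar) \<le> Bg1 * norm (x - zbar)" using gdiff x zbH by blast
    moreover have "Bg1 * norm (x - zbar) \<le> Bg1 * Dh" using diam x zbH Bg1_0 by (simp add: mult_left_mono)
    ultimately show ?thesis by linarith
  qed
  have bddg: "bdd_above ((\<lambda>x. norm (g x)) ` H)"
    by (rule bdd_aboveI[where M = "norm (g zbar) + Bg1 * Dh"]) (use gb in auto)
  have g0: "\<forall>x\<in>H. norm (g x) \<le> Bg0" unfolding Bg0_def using bddg by (auto intro: cSUP_upper)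
  have Bg0_0: "0 \<le> Bg0" using g0 zbH by (meson norm_ge_zero order_trans)
  have fb: "norm (gradf x) \<le> norm (gradf zbar) + Lf * Dh" if x: "x \<in> H" for x
  proof -
    have "norm (gradf x) \<le> norm (gradf zbar) + norm (gradf x - gradf zbar)" by (metis norm_triangle_sub add.commute)
    moreover have "norm (gradf x - gradf zbar) \<le> Lf * norm (x - zbar)" using B2(7) x zbH by blast
    moreover have "Lf * norm (x - zbar) \<le> Lf * Dh" using diam x zbH Lf0 by (simp add: mult_left_mono)
    ultimately show ?thesis by linarith
  qed
  have bddf: "bdd_above ((\<lambda>x. norm (gradf x)) ` H)"
    by (rule bdd_aboveI[where M = "norm (gradf zbar) + Lf * Dh"]) (use fb in auto)
  have gfb: "\<forall>x\<in>H. norm (gradf x) \<le> Bf1" unfolding Bf1_def using bddf by (auto intro: cSUP_upper)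
  have Bf1_0: "0 \<le> Bf1" using gfb zbH by (meson norm_ge_zero order_trans)
  have sig2: "\<sigma>\<^sup>2 \<le> 1 / 2"
  proof -
    have "\<sigma>\<^sup>2 \<le> (1 / sqrt 2)\<^sup>2" using inputs(3,4) by (intro power_mono) auto
    thus ?thesis by (simp add: power_divide)
  qed
  have sig1: "\<sigma> < 1"
  proof (rule ccontr)
    assume "\<not> \<sigma> < 1"
    hence "1 \<le> \<sigma>\<^sup>2" by (simp add: one_le_power)
    with sig2 show False by simp
  qed
  have Lam0: "0 \<le> Lam Lf Lg Bg0 Bg1 c' p'" if "0 < c'" for c' :: real and p' :: 'l
    unfolding Lam_def using Lf0 Lg0 Bg0_0 that by (simp add: add_nonneg_nonneg)
  have cpos: "0 < c j" if "1 \<le> j" "j \<le> k" for j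
    using that
  proof (induction j)
    case 0 then show ?case by simp
  next
    case (Suc j)
    show ?case
    proof (cases "j = 0")
      case True thus ?thesis using init inputs(5) by simp
    next
      case False
      hence j1: "1 \<le> j" by simp
      have jk: "j \<le> k" using Suc.prems by simp
      have cj: "0 < c j" using Suc.IH j1 jk by simp
      have ns: "\<forall>i\<in>{1..j}. \<not> stop i" using k(3) jk by auto
      from step34[rule_format, OF j1 ns[rule_format]] have "c (j + 1) = 2 * c j \<or> c (j + 1) = c j"
        by (auto split: if_splits)
      thus ?thesis using cj by auto
    qed
  qed
  have iter: "z j \<in> H \<and> 0 \<le> eps j \<and>
      v j \<in> eps_subdiff_on H (eps j) (\<lambda>x. lam * aug_lagr f h g K (c j) x (p (j - 1)) + (norm (x - z (j - 1)))\<^sup>2 / 2) (z j)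
      \<and> (norm (v j))\<^sup>2 + 2 * eps j \<le> (\<sigma> / sqrt (lam * Lam Lf Lg Bg0 Bg1 (c j) (p (j - 1)) + 1))\<^sup>2 * (norm (v j + z (j - 1) - z j))\<^sup>2
      \<and> p j = closest_point (dual_cone K) (p (j - 1) + c j *\<^sub>R g (z j))"
    if j: "1 \<le> j" "j \<le> k" for j
  proof -
    have ns1: "\<forall>i\<in>{1..<j}. \<not> stop i" using k(3) j by auto
    have ns2: "\<forall>i\<in>{1..j}. \<not> stop i" using k(3) j by auto
    have a: "z j \<in> H \<and> 0 \<le> eps j \<and>
      v j \<in> eps_subdiff_on H (eps j) (\<lambda>x. lam * aug_lagr f h g K (c j) x (p (j - 1)) + (norm (x - z (j - 1)))\<^sup>2 / 2) (z j)
      \<and> (norm (v j))\<^sup>2 + 2 * eps j \<le> (\<sigma> / sqrt (lam * Lam Lf Lg Bg0 Bg1 (c j) (p (j - 1)) + 1))\<^sup>2 * (norm (v j + z (j - 1) - z j))\<^sup>2"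
      using step1[rule_format, OF j(1) ns1[rule_format]] unfolding Let_def .
    have "p j = closest_point Kstar (p (j - 1) + c j *\<^sub>R g (z j))"
      using step34[rule_format, OF j(1) ns2[rule_format]] by blast
    thus ?thesis using a unfolding Kstar_def by blast
  qed
  have zprev: "z (j - 1) \<in> H" if "1 \<le> j" "j \<le> k" for j
  proof (cases "j = 1")
    case True thus ?thesis using inputs(6) by simp
  next
    case False thus ?thesis using iter[of "j - 1"] that by simp
  qed
  define M where "M = (Kh + Bf1) * Dh + (1 + 1 / (1 - \<sigma>) + \<sigma>\<^sup>2 / (2 * (1 - \<sigma>)\<^sup>2)) * Dh\<^sup>2 / lam"
  have Mk: "M \<le> kappa0"
  proof -
    have a: "(Kh + Bf1) * Dh \<le> 2 * (Kh + Bf1) * Dh"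
    proof -
      have "0 \<le> (Kh + Bf1) * Dh" using Kh0 Bf1_0 Dh0 by simp
      thus ?thesis by linarith
    qed
    have "1 + 1 / (1 - \<sigma>) \<le> 2 * ((1 + \<sigma>) / (1 - \<sigma>))" using sig1 inputs(3)
      by (simp add: field_simps)
    hence "(1 + 1 / (1 - \<sigma>) + \<sigma>\<^sup>2 / (2 * (1 - \<sigma>)\<^sup>2)) * (Dh\<^sup>2 / lam)
        \<le> (\<sigma>\<^sup>2 / (2 * (1 - \<sigma>)\<^sup>2) + 2 * ((1 + \<sigma>) / (1 - \<sigma>))) * (Dh\<^sup>2 / lam)"
      using inputs(1) by (intro mult_right_mono) auto
    moreover have "(1 + 1 / (1 - \<sigma>) + \<sigma>\<^sup>2 / (2 * (1 - \<sigma>)\<^sup>2)) * Dh\<^sup>2 / lam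
        = (1 + 1 / (1 - \<sigma>) + \<sigma>\<^sup>2 / (2 * (1 - \<sigma>)\<^sup>2)) * (Dh\<^sup>2 / lam)" by simp
    moreover have "(\<sigma>\<^sup>2 / (2 * (1 - \<sigma>)\<^sup>2) + 2 * ((1 + \<sigma>) / (1 - \<sigma>))) * Dh\<^sup>2 / lam
        = (\<sigma>\<^sup>2 / (2 * (1 - \<sigma>)\<^sup>2) + 2 * ((1 + \<sigma>) / (1 - \<sigma>))) * (Dh\<^sup>2 / lam)" by simp
    ultimately show ?thesis unfolding M_def kappa0_def using a by linarith
  qed
  have st: "0 < s * \<tau>" "s * \<tau> \<le> 1" using s B4(2,3) by (auto simp: mult_le_one)
  have C0s: "C0 = max (norm (p 0)) kappa0 / (s * \<tau>)" unfolding C0_def s_def ..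
  have C0a: "M / (s * \<tau>) \<le> C0"
  proof -
    have "M \<le> max (norm (p 0)) kappa0" using Mk by linarith
    thus ?thesis unfolding C0s using st by (simp add: divide_right_mono)
  qed
  have C0b: "norm (p 0) \<le> C0"
  proof -
    have "norm (p 0) * (s * \<tau>) \<le> norm (p 0)" using st by (simp add: mult_left_le)
    also have "\<dots> \<le> max (norm (p 0)) kappa0" by simp
    finally show ?thesis unfolding C0s using st by (simp add: le_divide_eq)
  qed
  have pb: "norm (p j) \<le> C0" if "j \<le> k" for j
    using that
  proof (induction j)
    case 0 then show ?case using C0b by simp
  next
    case (Suc j)
    have j1: "1 \<le> Suc j" and jk: "Suc j \<le> k" using Suc.prems by auto
    note it = iter[OF j1 jk]
    have zoH: "z j \<in> H" using zprev[OF j1 jk] by simp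
    have cj: "0 < c (Suc j)" using cpos[OF j1 jk] .
    have it': "z (Suc j) \<in> H" "0 \<le> eps (Suc j)"
      "v (Suc j) \<in> eps_subdiff_on H (eps (Suc j)) (\<lambda>x. lam * aug_lagr f h g K (c (Suc j)) x (p j) + (norm (x - z j))\<^sup>2 / 2) (z (Suc j))"
      "(norm (v (Suc j)))\<^sup>2 + 2 * eps (Suc j) \<le> (\<sigma> / sqrt (lam * Lam Lf Lg Bg0 Bg1 (c (Suc j)) (p j) + 1))\<^sup>2 * (norm (v (Suc j) + z j - z (Suc j)))\<^sup>2"
      "p (Suc j) = closest_point (dual_cone K) (p j + c (Suc j) *\<^sub>R g (z (Suc j)))"
      using it by simp_all
    have Mb: "\<forall>u\<in>H. inner (adjoint (Jg (z (Suc j))) (closest_point (dual_cone K) (p j + c (Suc j) *\<^sub>R g (z (Suc j))))) (z (Suc j) - u) \<le> M"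
      unfolding M_def
      using mult_step[OF Kc B1(3) B3(2) B3(3) Lg0 Lf0 B1(4) B1(5) Kh0 B2(6) gfb g0 Bg0_0 g1 Bg1_0 diam
          B2(4) inputs(1) inputs(2) inputs(3) sig1 cj zoH it'(1) it'(2) it'(3) it'(4)] by blast
    note pp = proj_props[OF Kc, of "p j + c (Suc j) *\<^sub>R g (z (Suc j))"]
    have reg: "max (norm (adjoint (Jg (z (Suc j))) (p (Suc j)))) \<bar>inner (p (Suc j)) (g zbar)\<bar> \<ge> \<tau> * norm (p (Suc j))"
      using B4(5) it'(1) pp(1) it'(5) unfolding Kstar_def by simp
    have "norm (p (Suc j)) \<le> norm (p j) \<or> norm (p (Suc j)) \<le> M / (s * \<tau>)"
    proof -
      have reg': "max (norm (adjoint (Jg (z (Suc j))) (closest_point (dual_cone K) (p j + c (Suc j) *\<^sub>R g (z (Suc j))))))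
          \<bar>inner (closest_point (dual_cone K) (p j + c (Suc j) *\<^sub>R g (z (Suc j)))) (g zbar)\<bar>
          \<ge> \<tau> * norm (closest_point (dual_cone K) (p j + c (Suc j) *\<^sub>R g (z (Suc j))))"
        using reg unfolding it'(5) .
      show ?thesis unfolding it'(5)
        by (rule mult_case[OF B3(2) B3(3) B3(1) pp(1) pp(2) cj B4(4) ball s reg' B4(2) Mb])
    qed
    thus ?case using Suc.IH jk C0a by auto
  qed
  have k1: "1 \<le> k" using k(1) .
  note it = iter[OF k1 order_refl]
  have zoH: "z (k - 1) \<in> H" using zprev[OF k1 order_refl] .
  have ck: "0 < c k" using cpos[OF k1 order_refl] .
  have Lp1: "1 \<le> lam * Lam Lf Lg Bg0 Bg1 (c k) (p (k - 1)) + 1"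
    using Lam0[OF ck, of "p (k - 1)"] inputs(1) by simp
  have fin: "aug_lagr f h g K (c k) (z k) (p k) \<le> f u + h u + Dh\<^sup>2 / lam + 4 * C0\<^sup>2 / c k"
    if u: "u \<in> H" "cone_le K (g u) 0" for u
  proof -
    have A: "aug_lagr f h g K (c k) (z k) (p k) \<le> f u + h u + Dh\<^sup>2 / lam + (norm (p k - p (k - 1)))\<^sup>2 / c k"
    proof -
      have it': "z k \<in> H" "0 \<le> eps k"
        "v k \<in> eps_subdiff_on H (eps k) (\<lambda>x. lam * aug_lagr f h g K (c k) x (p (k - 1)) + (norm (x - z (k - 1)))\<^sup>2 / 2) (z k)"
        "(norm (v k))\<^sup>2 + 2 * eps k \<le> (\<sigma> / sqrt (lam * Lam Lf Lg Bg0 Bg1 (c k) (p (k - 1)) + 1))\<^sup>2 * (norm (v k + z (k - 1) - z k))\<^sup>2"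
        "p k = closest_point (dual_cone K) (p (k - 1) + c k *\<^sub>R g (z k))"
        using it by simp_all
      have sg0: "0 \<le> \<sigma>" using inputs(3) by simp
      show ?thesis unfolding it'(5)
        by (rule lagr_step[OF Kc diam inputs(1) sg0 sig2 Lp1 ck zoH it'(1) it'(2) it'(3) it'(4) u(1) u(2)])
    qed
    have "norm (p k - p (k - 1)) \<le> norm (p k) + norm (p (k - 1))" by (rule norm_triangle_ineq4)
    also have "\<dots> \<le> 2 * C0" using pb[of k] pb[of "k - 1"] by simp
    finally have nd: "norm (p k - p (k - 1)) \<le> 2 * C0" .
    have "(norm (p k - p (k - 1)))\<^sup>2 \<le> (2 * C0)\<^sup>2" by (rule power_mono[OF nd norm_ge_zero])
    hence "(norm (p k - p (k - 1)))\<^sup>2 / c k \<le> 4 * C0\<^sup>2 / c k" using ck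
      by (simp add: divide_right_mono power_mult_distrib)
    thus ?thesis using A by linarith
  qed
  define F where "F = {x \<in> H. cone_le K (g x) 0}"
  have Fne: "F \<noteq> {}" using zbH B4(4) unfolding F_def by blast
  have "aug_lagr f h g K (c k) (z k) (p k) - Dh\<^sup>2 / lam - 4 * C0\<^sup>2 / c k \<le> phi_up"
    unfolding phi_up_def F_def[symmetric]
  proof (rule cINF_greatest[OF Fne])
    fix x assume "x \<in> F"
    thus "aug_lagr f h g K (c k) (z k) (p k) - Dh\<^sup>2 / lam - 4 * C0\<^sup>2 / c k \<le> f x + h x"
      using fin unfolding F_def by fastforce
  qed
  moreover have "Rphi + phi_low = phi_up + Dh\<^sup>2 / lam" using Rphi_def by simp
  ultimately show ?thesis using k(2) by simp
qed

end
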